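(* Let $X$ be a feasible solution of the General-Cost Convex Program and let $\alpha_j$ be the first arrival times produced by Continuous-Time Poisson Rounding from $X$. For any box $i\in[n]$, any time $\tau\ge 0$, and any thresholds $\theta_j\ge 0$ for $j\ne i$, $$\mathbf{E}\Big[\sum_{j\ne i:\,\alpha_j<\tau}c_j\ \Big|\ \forall j\ne i,\ \alpha_j>\theta_j\Big]\le\tau.$$
   Context: Boxes $[n]$ with costs $c_i>0$. Write $x_+=\max\{x,0\}$. A feasible solution of the General-Cost Convex Program is a family of non-decreasing functions $X_i:[0,\infty)\to[0,1]$, $i\in[n]$, with $\sum_{i\in[n]}\big(X_i(t)-X_i((t-c_i)_+)\big)\le 1$ for all $t\ge 0$. Continuous-Time Poisson Rounding: let $\bar x_i(t)=\frac1t\int_0^t\big(X_i(t')-X_i((t'-c_i)_+)\big)\,dt'$. Independently for each box $i$, arrivals of box $i$ form a non-homogeneous Poisson process in time $\tau\ge 0$ with rate $\frac1{c_i}\bar x_i(\tau/2)$; $\alpha_i$ is the first arrival time of box $i$ ($\infty$ if none). *)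

theory Defs
  imports "HOL-Probability.Probability"
begin

definition feasible_GC :: "nat \<Rightarrow> (nat \<Rightarrow> real) \<Rightarrow> (nat \<Rightarrow> real \<Rightarrow> real) \<Rightarrow> bool" where
  "feasible_GC n c X \<longleftrightarrow>
     (\<forall>i<n. mono_on {0..} (X i) \<and> (\<forall>t\<ge>0. 0 \<le> X i t \<and> X i t \<le> 1)) \<and>
     (\<forall>t\<ge>0. (\<Sum>i<n. X i t - X i (max (t - c i) 0)) \<le> 1)"

definition xbar :: "(nat \<Rightarrow> real) \<Rightarrow> (nat \<Rightarrow> real \<Rightarrow> real) \<Rightarrow> nat \<Rightarrow> real \<Rightarrow> real" where
  "xbar c X i t = (1 / t) * (LBINT s:{0..t}. X i s - X i (max (s - c i) 0))"

definition poisson_rate :: "(nat \<Rightarrow> real) \<Rightarrow> (nat \<Rightarrow> real \<Rightarrow> real) \<Rightarrow> nat \<Rightarrow> real \<Rightarrow> real" where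
  "poisson_rate c X i tau = (1 / c i) * xbar c X i (tau / 2)"

definition cum_rate :: "(nat \<Rightarrow> real) \<Rightarrow> (nat \<Rightarrow> real \<Rightarrow> real) \<Rightarrow> nat \<Rightarrow> real \<Rightarrow> real" where
  "cum_rate c X i t = (LBINT s:{0..t}. poisson_rate c X i s)"

text \<open>First arrival times of Continuous-Time Poisson Rounding: independent, values in [0,\<infinity>],
  and the first arrival of an NHPP with rate lambda satisfies P(alpha > t) = exp(-\<integral>_0^t lambda).\<close>
definition poisson_rounding_first_arrivals ::
  "'a measure \<Rightarrow> nat \<Rightarrow> (nat \<Rightarrow> real) \<Rightarrow> (nat \<Rightarrow> real \<Rightarrow> real) \<Rightarrow> (nat \<Rightarrow> 'a \<Rightarrow> ennreal) \<Rightarrow> bool" where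
  "poisson_rounding_first_arrivals M n c X \<alpha> \<longleftrightarrow>
     prob_space.indep_vars M (\<lambda>_. borel) \<alpha> {..<n} \<and>
     (\<forall>j<n. \<forall>t\<ge>0. measure M {\<omega> \<in> space M. ennreal t < \<alpha> j \<omega>} = exp (- cum_rate c X j t))"

definition cond_exp_event :: "'a measure \<Rightarrow> ('a \<Rightarrow> real) \<Rightarrow> 'a set \<Rightarrow> real" where
  "cond_exp_event M Y B = (LINT \<omega>|M. indicator B \<omega> * Y \<omega>) / measure M B"

end

theory Submission
  imports Defs
begin

lemma sum_set_integral_le:
  fixes f :: "nat \<Rightarrow> real \<Rightarrow> real" and S :: "real set"
  assumes J: "finite J" and S: "S \<in> sets lborel" "emeasure lborel S < \<infinity>"
    and nn: "\<And>j s. j\<in>J \<Longrightarrow> s\<in>S \<Longrightarrow> 0 \<le> f j s"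
    and le: "\<And>s. s\<in>S \<Longrightarrow> (\<Sum>j\<in>J. f j s) \<le> 1"
  shows "(\<Sum>j\<in>J. LBINT s:S. f j s) \<le> measure lborel S"
proof -
  define J' where "J' = {j\<in>J. set_integrable lborel S (f j)}"
  have fin: "finite J'" using J unfolding J'_def by auto
  have "(\<Sum>j\<in>J. LBINT s:S. f j s) = (\<Sum>j\<in>J'. LBINT s:S. f j s)"
    unfolding J'_def
    by (rule sum.mono_neutral_right[OF J]) (auto simp: set_lebesgue_integral_def set_integrable_def not_integrable_integral_eq)
  also have "\<dots> = (LINT s|lborel. (\<Sum>j\<in>J'. indicator S s * f j s))"
    unfolding set_lebesgue_integral_def real_scaleR_def
    by (subst Bochner_Integration.integral_sum) (auto simp: J'_def set_integrable_def)
  also have "\<dots> \<le> (LINT s|lborel. indicator S s)"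
  proof (rule integral_mono)
    show "integrable lborel (\<lambda>s. \<Sum>j\<in>J'. indicator S s * f j s)"
      by (rule Bochner_Integration.integrable_sum) (auto simp: J'_def set_integrable_def)
    show "integrable lborel (indicat_real S)" using S by simp
    fix s show "(\<Sum>j\<in>J'. indicator S s * f j s) \<le> indicat_real S s"
    proof (cases "s \<in> S")
      case True
      have "(\<Sum>j\<in>J'. f j s) \<le> (\<Sum>j\<in>J. f j s)"
        by (rule sum_mono2[OF J]) (auto simp: J'_def nn True)
      then show ?thesis using le[OF True] True by simp
    qed simp
  qed
  also have "\<dots> = measure lborel S" using S by simp
  finally show ?thesis .
qed

lemma (in prob_space) single_bound:
  fixes a :: "'a \<Rightarrow> ennreal" and L :: "real \<Rightarrow> real"
  assumes am: "a \<in> borel_measurable M"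
    and P: "\<And>t. t \<ge> 0 \<Longrightarrow> prob {\<omega>\<in>space M. ennreal t < a \<omega>} = exp (- L t)"
    and th: "\<theta> \<ge> 0" and ta: "\<tau> \<ge> 0"
  shows "prob {\<omega>\<in>space M. ennreal \<theta> < a \<omega> \<and> a \<omega> < ennreal \<tau>}
           \<le> L \<tau> * prob {\<omega>\<in>space M. ennreal \<theta> < a \<omega>}"
proof -
  have L0: "L t \<ge> 0" if "t \<ge> 0" for t
  proof -
    have "exp (- L t) \<le> 1" using P[OF that] by (metis prob_le_1)
    then show ?thesis by simp
  qed
  show ?thesis
  proof (cases "\<tau> \<le> \<theta>")
    case True
    have e: "{\<omega>\<in>space M. ennreal \<theta> < a \<omega> \<and> a \<omega> < ennreal \<tau>} = {}"
      using True by (auto dest: ennreal_leI order.strict_trans order.strict_trans2)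
    show ?thesis unfolding e using L0[OF ta] by simp
  next
    case False
    let ?A = "{\<omega>\<in>space M. ennreal \<theta> < a \<omega>}"
    let ?B = "{\<omega>\<in>space M. ennreal \<tau> \<le> a \<omega>}"
    let ?C = "{\<omega>\<in>space M. ennreal \<tau> < a \<omega>}"
    have mA: "?A \<in> events" and mB: "?B \<in> events" and mC: "?C \<in> events" using am by measurable
    have lt: "ennreal \<theta> < ennreal \<tau>" using False th by (simp add: ennreal_lessI)
    have eq: "{\<omega>\<in>space M. ennreal \<theta> < a \<omega> \<and> a \<omega> < ennreal \<tau>} = ?A - ?B"
      by (auto simp: not_le)
    have BA: "?B \<subseteq> ?A" using lt by (auto intro: order.strict_trans2)
    have "prob ?C \<le> prob ?B" by (rule finite_measure_mono) (use mB in auto)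
    then have "prob (?A - ?B) \<le> exp (- L \<theta>) - exp (- L \<tau>)"
      using finite_measure_Diff[OF mA mB BA] P[OF th] P[OF ta] by simp
    also have "\<dots> \<le> L \<tau> * exp (- L \<theta>)"
    proof -
      have e: "exp (- L \<tau>) = exp (- L \<theta>) * exp (- (L \<tau> - L \<theta>))" by (simp add: exp_add[symmetric])
      have "1 - (L \<tau> - L \<theta>) \<le> exp (- (L \<tau> - L \<theta>))" using exp_ge_add_one_self[of "L \<theta> - L \<tau>"] by (simp add: algebra_simps)
      then have "1 - exp (- (L \<tau> - L \<theta>)) \<le> L \<tau>" using L0[OF th] by linarith
      then have "exp (- L \<theta>) * (1 - exp (- (L \<tau> - L \<theta>))) \<le> exp (- L \<theta>) * L \<tau>"
        by (intro mult_left_mono) auto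
      then show ?thesis unfolding e by (simp add: algebra_simps)
    qed
    finally show ?thesis using eq P[OF th] by simp
  qed
qed


lemma g_nonneg:
  assumes "feasible_GC n c X" "j < n" "c j > 0" "s \<ge> 0"
  shows "0 \<le> X j s - X j (max (s - c j) 0)"
proof -
  have "\<forall>i<n. mono_on {0..} (X i) \<and> (\<forall>t\<ge>0. 0 \<le> X i t \<and> X i t \<le> 1)"
    using assms(1) unfolding feasible_GC_def by (rule conjunct1)
  then have "mono_on {0..} (X j)" using assms(2) by blast
  moreover have "max (s - c j) 0 \<le> s" using assms by auto
  ultimately have "X j (max (s - c j) 0) \<le> X j s" using assms(4) by (auto intro!: mono_onD[where A="{0..}" and f="X j"])
  then show ?thesis by simp
qed

lemma xbar_nonneg:
  assumes "feasible_GC n c X" "j < n" "c j > 0" "t \<ge> 0"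
  shows "0 \<le> xbar c X j t"
proof -
  have "0 \<le> (LBINT s:{0..t}. X j s - X j (max (s - c j) 0))"
    unfolding set_lebesgue_integral_def
  proof (rule Bochner_Integration.integral_nonneg)
    fix s :: real
    show "0 \<le> indicator {0..t} s *\<^sub>R (X j s - X j (max (s - c j) 0))"
      using g_nonneg[OF assms(1,2,3), of s] by (cases "s \<in> {0..t}") auto
  qed
  then show ?thesis unfolding xbar_def using assms(4) by (intro mult_nonneg_nonneg) auto
qed

lemma xbar_sum:
  assumes "feasible_GC n c X" "\<forall>j<n. c j > 0" "t \<ge> 0"
  shows "(\<Sum>j<n. xbar c X j t) \<le> 1"
proof (cases "t = 0")
  case True then show ?thesis by (simp add: xbar_def)
next
  case False
  then have tp: "t > 0" using assms by simp
  have "(\<Sum>j<n. LBINT s:{0..t}. X j s - X j (max (s - c j) 0)) \<le> measure lborel {0..t}"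
  proof (rule sum_set_integral_le)
    fix j s assume "j \<in> {..<n}" "s \<in> {0..t}"
    then show "0 \<le> X j s - X j (max (s - c j) 0)" using assms by (intro g_nonneg[OF assms(1)]) auto
  next
    fix s :: real assume s: "s \<in> {0..t}"
    have feas: "\<forall>t\<ge>0. (\<Sum>i<n. X i t - X i (max (t - c i) 0)) \<le> 1"
      using assms(1) unfolding feasible_GC_def by blast
    show "(\<Sum>j<n. X j s - X j (max (s - c j) 0)) \<le> 1" using feas s by simp
  qed (use assms in auto)
  also have "\<dots> = t" using tp by simp
  finally have "(\<Sum>j<n. LBINT s:{0..t}. X j s - X j (max (s - c j) 0)) \<le> t" .
  then have "(1/t) * (\<Sum>j<n. LBINT s:{0..t}. X j s - X j (max (s - c j) 0)) \<le> (1/t) * t"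
    using tp by (intro mult_left_mono) auto
  moreover have "(\<Sum>j<n. xbar c X j t) = (1/t) * (\<Sum>j<n. LBINT s:{0..t}. X j s - X j (max (s - c j) 0))"
    unfolding xbar_def sum_distrib_left ..
  moreover have "(1/t) * t = 1" using tp by simp
  ultimately show ?thesis by linarith
qed

lemma rate_sum:
  assumes "feasible_GC n c X" "\<forall>j<n. c j > 0" "\<tau> \<ge> 0" "J \<subseteq> {..<n}"
  shows "(\<Sum>j\<in>J. c j * cum_rate c X j \<tau>) \<le> \<tau>"
proof -
  have fJ: "finite J" using assms(4) finite_subset by blast
  have "(\<Sum>j\<in>J. c j * cum_rate c X j \<tau>) = (\<Sum>j\<in>J. LBINT s:{0..\<tau>}. xbar c X j (s/2))"
  proof (rule sum.cong)
    fix j assume "j \<in> J"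
    then have "c j > 0" using assms by auto
    then show "c j * cum_rate c X j \<tau> = (LBINT s:{0..\<tau>}. xbar c X j (s/2))"
      unfolding cum_rate_def poisson_rate_def set_integral_mult_right by simp
  qed simp
  also have "\<dots> \<le> measure lborel {0..\<tau>}"
  proof (rule sum_set_integral_le[OF fJ])
    fix j s assume "j \<in> J" "s \<in> {0..\<tau>}"
    then show "0 \<le> xbar c X j (s/2)" using assms by (intro xbar_nonneg[OF assms(1)]) auto
  next
    fix s :: real assume s: "s \<in> {0..\<tau>}"
    have "(\<Sum>j\<in>J. xbar c X j (s/2)) \<le> (\<Sum>j<n. xbar c X j (s/2))"
      using assms s by (intro sum_mono2) (auto intro!: xbar_nonneg[OF assms(1)])
    also have "\<dots> \<le> 1" using s by (intro xbar_sum[OF assms(1,2)]) auto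
    finally show "(\<Sum>j\<in>J. xbar c X j (s/2)) \<le> 1" .
  qed (use assms in auto)
  also have "\<dots> = \<tau>" using assms by simp
  finally show ?thesis .
qed


theorem lemma4p4:
  fixes M :: "'a measure" and n :: nat and c :: "nat \<Rightarrow> real"
    and X :: "nat \<Rightarrow> real \<Rightarrow> real" and \<alpha> :: "nat \<Rightarrow> 'a \<Rightarrow> ennreal"
    and i :: nat and \<tau> :: real and \<theta> :: "nat \<Rightarrow> real"
  assumes "prob_space M"
    and "\<forall>j<n. c j > 0"
    and "feasible_GC n c X"
    and "poisson_rounding_first_arrivals M n c X \<alpha>"
    and "i < n" and "\<tau> \<ge> 0"
    and "\<forall>j\<in>{..<n} - {i}. \<theta> j \<ge> 0"
  shows "cond_exp_event M
           (\<lambda>\<omega>. \<Sum>j\<in>{j\<in>{..<n} - {i}. \<alpha> j \<omega> < ennreal \<tau>}. c j)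
           {\<omega> \<in> space M. \<forall>j\<in>{..<n} - {i}. \<alpha> j \<omega> > ennreal (\<theta> j)}
         \<le> \<tau>"
proof -
  interpret prob_space M by fact
  define J where "J = {..<n} - {i}"
  define B where "B = {\<omega> \<in> space M. \<forall>j\<in>J. \<alpha> j \<omega> > ennreal (\<theta> j)}"
  define E where "E = (LINT \<omega>|M. indicator B \<omega> * (\<Sum>j\<in>{j\<in>J. \<alpha> j \<omega> < ennreal \<tau>}. c j))"
  have goal: "cond_exp_event M (\<lambda>\<omega>. \<Sum>j\<in>{j\<in>{..<n} - {i}. \<alpha> j \<omega> < ennreal \<tau>}. c j)
           {\<omega> \<in> space M. \<forall>j\<in>{..<n} - {i}. \<alpha> j \<omega> > ennreal (\<theta> j)} = E / prob B"
    unfolding cond_exp_event_def E_def B_def J_def ..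
  have fJ: "finite J" unfolding J_def by auto
  have Jn: "J \<subseteq> {..<n}" unfolding J_def by auto
  have indep: "indep_vars (\<lambda>_. borel) \<alpha> {..<n}"
    and P: "\<And>j t. j < n \<Longrightarrow> t \<ge> 0 \<Longrightarrow> prob {\<omega> \<in> space M. ennreal t < \<alpha> j \<omega>} = exp (- cum_rate c X j t)"
    using assms(4) unfolding poisson_rounding_first_arrivals_def by auto
  have meas: "\<And>j. j < n \<Longrightarrow> \<alpha> j \<in> borel_measurable M"
    and isets: "indep_sets (\<lambda>j. {\<alpha> j -` A \<inter> space M |A. A \<in> sets borel}) {..<n}"
    using indep unfolding indep_vars_def2 by auto
  show ?thesis
  proof (cases "J = {}")
    case True
    then show ?thesis unfolding goal E_def using assms(6) by simp
  next
    case Jne: False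
    define A where "A k = {\<omega> \<in> space M. ennreal (\<theta> k) < \<alpha> k \<omega>}" for k
    define A' where "A' j k = (if k = j then {\<omega> \<in> space M. ennreal (\<theta> j) < \<alpha> j \<omega> \<and> \<alpha> j \<omega> < ennreal \<tau>} else A k)" for j k
    define C where "C j = (\<Inter>k\<in>J. A' j k)" for j
    have AF: "A k \<in> {\<alpha> k -` A \<inter> space M |A. A \<in> sets borel}" for k
      unfolding A_def by (intro CollectI exI[of _ "{ennreal (\<theta> k)<..}"]) auto
    have A'F: "A' j k \<in> {\<alpha> k -` A \<inter> space M |A. A \<in> sets borel}" for j k
    proof (cases "k = j")
      case True
      then show ?thesis unfolding A'_def
        by (intro CollectI exI[of _ "{ennreal (\<theta> k)<..<ennreal \<tau>}"]) auto
    next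
      case False
      then show ?thesis using AF[of k] by (simp add: A'_def)
    qed
    have evA': "A' j k \<in> events" if "k < n" for j k
      using A'F[of j k] meas[OF that] by (auto intro: measurable_sets)
    have evC: "C j \<in> events" for j
      unfolding C_def using fJ Jne evA' Jn by (intro sets.finite_INT) auto
    have B_eq: "B = (\<Inter>k\<in>J. A k)"
      using Jne unfolding B_def A_def by auto
    have PB: "prob B = (\<Prod>k\<in>J. prob (A k))"
      unfolding B_eq using fJ Jne Jn AF by (intro indep_setsD[OF isets]) auto
    have memC: "\<omega> \<in> C j \<longleftrightarrow> \<omega> \<in> B \<and> \<alpha> j \<omega> < ennreal \<tau>" if "\<omega> \<in> space M" "j \<in> J" for \<omega> j
    proof -
      have "\<omega> \<in> C j \<longleftrightarrow> (\<forall>k\<in>J. \<omega> \<in> A' j k)" unfolding C_def by simp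
      also have "\<dots> \<longleftrightarrow> (\<forall>k\<in>J. ennreal (\<theta> k) < \<alpha> k \<omega>) \<and> \<alpha> j \<omega> < ennreal \<tau>"
      proof -
        have e: "\<omega> \<in> A' j k \<longleftrightarrow> ennreal (\<theta> k) < \<alpha> k \<omega> \<and> (k = j \<longrightarrow> \<alpha> j \<omega> < ennreal \<tau>)" for k
          using that(1) by (simp add: A'_def A_def)
        show ?thesis unfolding e using that(2) by blast
      qed
      also have "\<dots> \<longleftrightarrow> \<omega> \<in> B \<and> \<alpha> j \<omega> < ennreal \<tau>" using that unfolding B_def by simp
      finally show ?thesis .
    qed
    have "E = (LINT \<omega>|M. (\<Sum>j\<in>J. c j * indicator (C j) \<omega>))"
      unfolding E_def
    proof (rule Bochner_Integration.integral_cong)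
      fix \<omega> assume w: "\<omega> \<in> space M"
      have "indicator B \<omega> * (\<Sum>j\<in>{j\<in>J. \<alpha> j \<omega> < ennreal \<tau>}. c j)
          = indicator B \<omega> * (\<Sum>j\<in>J. if \<alpha> j \<omega> < ennreal \<tau> then c j else 0)"
        by (simp only: sum.inter_filter[OF fJ])
      also have "\<dots> = (\<Sum>j\<in>J. c j * indicator (C j) \<omega>)"
        unfolding sum_distrib_left
      proof (rule sum.cong)
        fix j assume j: "j \<in> J"
        show "indicator B \<omega> * (if \<alpha> j \<omega> < ennreal \<tau> then c j else 0) = c j * indicator (C j) \<omega>"
          unfolding indicator_def using memC[OF w j] by simp
      qed simp
      finally show "indicator B \<omega> * (\<Sum>j\<in>{j\<in>J. \<alpha> j \<omega> < ennreal \<tau>}. c j) = (\<Sum>j\<in>J. c j * indicator (C j) \<omega>)" .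
    qed simp
    also have "\<dots> = (\<Sum>j\<in>J. c j * prob (C j))"
      by (subst Bochner_Integration.integral_sum) (auto simp: evC less_top[symmetric] intro!: integrable_real_indicator)
    also have "\<dots> \<le> (\<Sum>j\<in>J. c j * (cum_rate c X j \<tau> * prob B))"
    proof (rule sum_mono)
      fix j assume j: "j \<in> J"
      have jn: "j < n" using j Jn by auto
      have "prob (C j) = (\<Prod>k\<in>J. prob (A' j k))"
        unfolding C_def using fJ Jne Jn A'F by (intro indep_setsD[OF isets]) auto
      also have "\<dots> = prob (A' j j) * (\<Prod>k\<in>J-{j}. prob (A' j k))"
        using fJ j by (simp add: prod.remove)
      also have "\<dots> = prob (A' j j) * (\<Prod>k\<in>J-{j}. prob (A k))"
        by (simp add: A'_def)
      also have "\<dots> \<le> (cum_rate c X j \<tau> * prob (A j)) * (\<Prod>k\<in>J-{j}. prob (A k))"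
      proof (rule mult_right_mono)
        show "prob (A' j j) \<le> cum_rate c X j \<tau> * prob (A j)"
        proof -
          have "prob {\<omega>\<in>space M. ennreal (\<theta> j) < \<alpha> j \<omega> \<and> \<alpha> j \<omega> < ennreal \<tau>}
              \<le> cum_rate c X j \<tau> * prob {\<omega>\<in>space M. ennreal (\<theta> j) < \<alpha> j \<omega>}"
            by (rule single_bound[OF meas[OF jn]]) (use P[OF jn] assms(6,7) j in \<open>auto simp: J_def\<close>)
          then show ?thesis by (simp add: A'_def A_def)
        qed
      next
        show "0 \<le> (\<Prod>k\<in>J-{j}. prob (A k))" by (rule prod_nonneg) simp
      qed
      also have "\<dots> = cum_rate c X j \<tau> * prob B"
        unfolding PB using fJ j by (simp add: prod.remove mult.assoc)
      finally show "c j * prob (C j) \<le> c j * (cum_rate c X j \<tau> * prob B)"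
        using assms(2) jn by (intro mult_left_mono) auto
    qed
    also have "\<dots> = prob B * (\<Sum>j\<in>J. c j * cum_rate c X j \<tau>)"
      by (simp add: sum_distrib_left algebra_simps)
    also have "\<dots> \<le> prob B * \<tau>"
      by (intro mult_left_mono rate_sum[OF assms(3,2,6) Jn]) auto
    finally have Eb: "E \<le> prob B * \<tau>" .
    show ?thesis
    proof (cases "prob B = 0")
      case True then show ?thesis unfolding goal using assms(6) by simp
    next
      case False
      then have "prob B > 0" using measure_nonneg[of M B] by linarith
      then show ?thesis unfolding goal using Eb by (simp add: divide_le_eq mult.commute)
    qed
  qed
qed

end
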